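(* Let $A=(a_0,\dots,a_{n-1})$ be an array of pairwise distinct numbers, $k_1<k_2$ positive integers, $\Delta=k_2-k_1$. Consider one iteration of Cover-approx$(A,k_1,k_2)$, in which the prefix $(a,c)$ (from the current start $a$ to the found end $c$) and then the suffix $(b,c)$ are found. Let $X=(x_1,\dots,x_{k_2})$ be the lexicographically minimal (with respect to the sequence of positions) increasing subsequence of length $k_2$ of $(a_a,\dots,a_c)$, and $Y=(y_1,\dots,y_{k_1})$ the lexicographically minimal increasing subsequence of length $k_1$ of $(a_b,\dots,a_c)$, where $x_t,y_t$ denote positions. Then $y_i\ge x_{i+\Delta}$ for all $1\le i\le k_1$.
   Context: For $i\le j$, $\mathrm{LIS}(i,j)$ denotes the length of a longest increasing subsequence of $(a_i,\dots,a_j)$. Cover-approx$(A,k_1,k_2)$: set $C=\emptyset$, $i=0$. Repeat: let $j$ be the smallest index $\ge i$ with $\mathrm{LIS}(i,j)\ge k_2$; if none exists, return $C$. Let $q$ be the largest index $\le j$ with $\mathrm{LIS}(q,j)\ge k_1$. Add the segment $(q,j,L)$ to $C$, where $L$ is a longest increasing subsequence of $(a_q,\dots,a_j)$, and set $i=q$. In an iteration, $(i,j)$ is called the computed prefix and $(q,j)$ the computed suffix. *)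

theory Defs
  imports Complex_Main
begin

text \<open>Arrays are functions A :: nat => real, positions 0..n-1.
  An increasing subsequence of (a_i,...,a_j) is given by its list of positions.\<close>

definition inc_subseq :: "(nat \<Rightarrow> real) \<Rightarrow> nat \<Rightarrow> nat \<Rightarrow> nat list \<Rightarrow> bool" where
  "inc_subseq A i j ps \<longleftrightarrow>
     sorted_wrt (<) ps \<and> set ps \<subseteq> {i..j} \<and> sorted_wrt (<) (map A ps)"

definition LIS :: "(nat \<Rightarrow> real) \<Rightarrow> nat \<Rightarrow> nat \<Rightarrow> nat" where
  "LIS A i j = Max {length ps | ps. inc_subseq A i j ps}"

definition lexmin_inc_subseq :: "(nat \<Rightarrow> real) \<Rightarrow> nat \<Rightarrow> nat \<Rightarrow> nat \<Rightarrow> nat list \<Rightarrow> bool" where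
  "lexmin_inc_subseq A i j k ps \<longleftrightarrow>
     inc_subseq A i j ps \<and> length ps = k \<and>
     (\<forall>qs. inc_subseq A i j qs \<and> length qs = k \<longrightarrow>
            ps = qs \<or> (ps, qs) \<in> lexord {(x, y). x < y})"

definition is_least :: "nat set \<Rightarrow> nat \<Rightarrow> bool" where
  "is_least S x \<longleftrightarrow> x \<in> S \<and> (\<forall>y\<in>S. x \<le> y)"

definition is_greatest :: "nat set \<Rightarrow> nat \<Rightarrow> bool" where
  "is_greatest S x \<longleftrightarrow> x \<in> S \<and> (\<forall>y\<in>S. y \<le> x)"

text \<open>Start indices i reached by Cover-approx(A,k1,k2) on an array of length n.\<close>
inductive cover_start :: "(nat \<Rightarrow> real) \<Rightarrow> nat \<Rightarrow> nat \<Rightarrow> nat \<Rightarrow> nat \<Rightarrow> bool"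
  for A n k1 k2 where
  init: "cover_start A n k1 k2 0"
| step: "cover_start A n k1 k2 i \<Longrightarrow>
         is_least {j. i \<le> j \<and> j < n \<and> k2 \<le> LIS A i j} j \<Longrightarrow>
         is_greatest {q. q \<le> j \<and> k1 \<le> LIS A q j} q \<Longrightarrow>
         cover_start A n k1 k2 q"

end

theory Submission
  imports Defs
begin

lemma in_take_nth: "x \<in> set (take m xs) \<Longrightarrow> \<exists>j<m. j < length xs \<and> x = xs!j"
  by (auto simp: in_set_conv_nth)

lemma in_drop_nth: "x \<in> set (drop m xs) \<Longrightarrow> \<exists>j. m \<le> j \<and> j < length xs \<and> x = xs!j"
  by (auto simp: in_set_conv_nth) (metis add.commute le_add2 less_diff_conv)

lemma sw_le: "sorted_wrt (<) (xs::'a::linorder list) \<Longrightarrow> j \<le> k \<Longrightarrow> k < length xs \<Longrightarrow> xs!j \<le> xs!k"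
  by (metis le_less sorted_wrt_nth_less)

lemma swA_le: "sorted_wrt (<) (map (A::nat\<Rightarrow>real) xs) \<Longrightarrow> j \<le> k \<Longrightarrow> k < length xs \<Longrightarrow> A (xs!j) \<le> A (xs!k)"
  using sw_le[of "map A xs" j k] by simp

lemma swA_less: "sorted_wrt (<) (map (A::nat\<Rightarrow>real) xs) \<Longrightarrow> j < k \<Longrightarrow> k < length xs \<Longrightarrow> A (xs!j) < A (xs!k)"
  using sorted_wrt_nth_less[of "(<)" "map A xs" j k] by simp

lemma LIS_ge:
  assumes "inc_subseq A i j ps" shows "length ps \<le> LIS A i j"
proof -
  have "length ps' \<le> Suc j" if "inc_subseq A i j ps'" for ps'
  proof -
    from that have d: "distinct ps'" and s: "set ps' \<subseteq> {i..j}"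
      by (auto simp: inc_subseq_def strict_sorted_iff)
    have "length ps' = card (set ps')" using d by (simp add: distinct_card)
    also have "\<dots> \<le> card {i..j}" using card_mono[OF finite_atLeastAtMost s] .
    finally show ?thesis by simp
  qed
  then have "{length ps | ps. inc_subseq A i j ps} \<subseteq> {..Suc j}" by auto
  then have "finite {length ps | ps. inc_subseq A i j ps}" by (rule finite_subset) simp
  then show ?thesis unfolding LIS_def using assms by (intro Max_ge) auto
qed

theorem lemma3:
  fixes A :: "nat \<Rightarrow> real" and n k1 k2 a b c :: nat and X Y :: "nat list"
  assumes distinct: "inj_on A {..<n}"
    and k1_pos: "0 < k1" and k12: "k1 < k2"
    and start: "cover_start A n k1 k2 a"
    and prefix: "is_least {j. a \<le> j \<and> j < n \<and> k2 \<le> LIS A a j} c"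
    and suffix: "is_greatest {q. q \<le> c \<and> k1 \<le> LIS A q c} b"
    and X: "lexmin_inc_subseq A a c k2 X"
    and Y: "lexmin_inc_subseq A b c k1 Y"
  shows "\<forall>i < k1. X ! (i + (k2 - k1)) \<le> Y ! i"
proof -
  define d where "d = k2 - k1"
  have d1: "1 \<le> d" "k2 = k1 + d" using k12 by (auto simp: d_def)
  from X have Xs: "sorted_wrt (<) X" "set X \<subseteq> {a..c}" "sorted_wrt (<) (map A X)"
    and lX: "length X = k2"
    and Xmin: "\<And>qs. inc_subseq A a c qs \<Longrightarrow> length qs = k2 \<Longrightarrow> X = qs \<or> (X, qs) \<in> lexord {(x, y). x < y}"
    by (auto simp: lexmin_inc_subseq_def inc_subseq_def)
  from Y have Ys: "sorted_wrt (<) Y" "set Y \<subseteq> {b..c}" "sorted_wrt (<) (map A Y)"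
    and lY: "length Y = k1"
    by (auto simp: lexmin_inc_subseq_def inc_subseq_def)
  from prefix have cn: "c < n" and ac: "a \<le> c" and LISac: "k2 \<le> LIS A a c"
    by (auto simp: is_least_def)
  have ab: "a \<le> b" using suffix ac LISac k12 by (auto simp: is_greatest_def)
  have bc: "b \<le> c" using suffix by (auto simp: is_greatest_def)
  have noSb: "length ps < k1" if "inc_subseq A (Suc b) c ps" for ps
  proof (rule ccontr)
    assume "\<not> length ps < k1"
    then have l: "k1 \<le> length ps" by simp
    then have "ps \<noteq> []" using k1_pos by auto
    then have "hd ps \<in> set ps" by simp
    then have "Suc b \<le> c" using that by (auto simp: inc_subseq_def)
    moreover have "k1 \<le> LIS A (Suc b) c" using LIS_ge[OF that] l by simp
    ultimately show False using suffix by (auto simp: is_greatest_def)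
  qed
  have Xin: "X!j \<in> {a..c}" if "j < k2" for j using Xs(2) lX that nth_mem by fastforce
  have Yin: "Y!j \<in> {b..c}" if "j < k1" for j using Ys(2) lY that nth_mem by fastforce
  have key: "X!(i+d) \<le> Y!i" if i: "i < k1" and H: "X!(i+d-1) < Y!i" for i
  proof (rule ccontr)
    assume "\<not> X!(i+d) \<le> Y!i"
    then have lt: "Y!i < X!(i+d)" by simp
    have xi: "X!(i+d) \<in> {a..c}" using Xin i d1 by simp
    have yi: "Y!i \<in> {b..c}" using Yin i by simp
    have "A (Y!i) \<noteq> A (X!(i+d))"
      proof
      assume "A (Y!i) = A (X!(i+d))"
      moreover have "Y!i \<in> {..<n}" "X!(i+d) \<in> {..<n}" using xi yi cn by auto
      ultimately have "Y!i = X!(i+d)" by (rule inj_onD[OF distinct])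
      then show False using lt by simp
    qed
    then consider "A (Y!i) < A (X!(i+d))" | "A (X!(i+d)) < A (Y!i)" by linarith
    then show False
    proof cases
      case 1
      define L where "L = take i (drop 1 Y) @ drop (i+d) X"
      have lL: "length L = k1" unfolding L_def using lX lY i d1 by auto
      have "inc_subseq A (Suc b) c L"
        unfolding inc_subseq_def L_def map_append sorted_wrt_append
      proof (intro conjI)
        show "sorted_wrt (<) (take i (drop 1 Y))" "sorted_wrt (<) (drop (i+d) X)"
          "sorted_wrt (<) (map A (take i (drop 1 Y)))" "sorted_wrt (<) (map A (drop (i+d) X))"
          using Xs Ys by (auto simp: take_map[symmetric] drop_map[symmetric])
        show "\<forall>x\<in>set (take i (drop 1 Y)). \<forall>y\<in>set (drop (i+d) X). x < y"
        proof (intro ballI)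
          fix x y assume x: "x \<in> set (take i (drop 1 Y))" and y: "y \<in> set (drop (i+d) X)"
          from in_take_nth[OF x] obtain j where j: "j < i" "x = Y!(Suc j)" by auto
          from in_drop_nth[OF y] obtain k where k: "i+d \<le> k" "k < length X" "y = X!k" by auto
          have "Y!(Suc j) \<le> Y!i" using sw_le[OF Ys(1), of "Suc j" i] j i lY by simp
          moreover have "X!(i+d) \<le> X!k" using sw_le[OF Xs(1)] k by simp
          ultimately show "x < y" using lt j k by simp
        qed
        show "\<forall>x\<in>set (map A (take i (drop 1 Y))). \<forall>y\<in>set (map A (drop (i+d) X)). x < y"
        proof (intro ballI)
          fix x y assume "x \<in> set (map A (take i (drop 1 Y)))" and "y \<in> set (map A (drop (i+d) X))"
          then obtain x' y' where x: "x' \<in> set (take i (drop 1 Y))" and y: "y' \<in> set (drop (i+d) X)"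
            and xy: "x = A x'" "y = A y'" by auto
          from in_take_nth[OF x] obtain j where j: "j < i" "x' = Y!(Suc j)" by auto
          from in_drop_nth[OF y] obtain k where k: "i+d \<le> k" "k < length X" "y' = X!k" by auto
          have "A (Y!(Suc j)) \<le> A (Y!i)" using swA_le[OF Ys(3), of "Suc j" i] j i lY by simp
          moreover have "A (X!(i+d)) \<le> A (X!k)" using swA_le[OF Xs(3)] k by simp
          ultimately show "x < y" using 1 j k xy by simp
        qed
        show "set (take i (drop 1 Y) @ drop (i+d) X) \<subseteq> {Suc b..c}"
        proof
          fix x assume "x \<in> set (take i (drop 1 Y) @ drop (i+d) X)"
          then consider "x \<in> set (take i (drop 1 Y))" | "x \<in> set (drop (i+d) X)" by auto
          then show "x \<in> {Suc b..c}"
          proof cases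
            case 1
            from in_take_nth[OF 1] obtain j where j: "j < i" "x = Y!(Suc j)" by auto
            have "Y!0 < Y!(Suc j)" using sorted_wrt_nth_less[OF Ys(1), of 0 "Suc j"] j i lY by simp
            moreover have "Y!0 \<in> {b..c}" "Y!(Suc j) \<in> {b..c}" using Yin k1_pos j i by auto
            ultimately show ?thesis using j by auto
          next
            case 2
            from in_drop_nth[OF 2] obtain k where k: "i+d \<le> k" "k < length X" "x = X!k" by auto
            have "Y!0 \<le> Y!i" using sw_le[OF Ys(1), of 0 i] i lY by simp
            moreover have "X!(i+d) \<le> X!k" using sw_le[OF Xs(1)] k by simp
            moreover have "Y!0 \<in> {b..c}" "X!k \<in> {a..c}" using Yin Xin k1_pos k lX by auto
            ultimately show ?thesis using k lt by auto
          qed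
        qed
      qed
      from noSb[OF this] lL show False by simp
    next
      case 2
      define Z where "Z = take (i+d) X @ drop i Y"
      have lZ: "length Z = k2" unfolding Z_def using lX lY i d1 by auto
      have Xm1: "X!(i+d-1) < X!(i+d)" using sorted_wrt_nth_less[OF Xs(1), of "i+d-1" "i+d"] d1 i lX by simp
      have "inc_subseq A a c Z"
        unfolding inc_subseq_def Z_def map_append sorted_wrt_append
      proof (intro conjI)
        show "sorted_wrt (<) (take (i+d) X)" "sorted_wrt (<) (drop i Y)"
          "sorted_wrt (<) (map A (take (i+d) X))" "sorted_wrt (<) (map A (drop i Y))"
          using Xs Ys by (auto simp: take_map[symmetric] drop_map[symmetric])
        show "\<forall>x\<in>set (take (i+d) X). \<forall>y\<in>set (drop i Y). x < y"
        proof (intro ballI)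
          fix x y assume x: "x \<in> set (take (i+d) X)" and y: "y \<in> set (drop i Y)"
          from in_take_nth[OF x] obtain j where j: "j < i+d" "x = X!j" by auto
          from in_drop_nth[OF y] obtain k where k: "i \<le> k" "k < length Y" "y = Y!k" by auto
          have "X!j \<le> X!(i+d-1)" using sw_le[OF Xs(1), of j "i+d-1"] j i lX d1 by simp
          moreover have "Y!i \<le> Y!k" using sw_le[OF Ys(1)] k by simp
          ultimately show "x < y" using H j k by simp
        qed
        show "\<forall>x\<in>set (map A (take (i+d) X)). \<forall>y\<in>set (map A (drop i Y)). x < y"
        proof (intro ballI)
          fix x y assume "x \<in> set (map A (take (i+d) X))" and "y \<in> set (map A (drop i Y))"
          then obtain x' y' where x: "x' \<in> set (take (i+d) X)" and y: "y' \<in> set (drop i Y)"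
            and xy: "x = A x'" "y = A y'" by auto
          from in_take_nth[OF x] obtain j where j: "j < i+d" "x' = X!j" by auto
          from in_drop_nth[OF y] obtain k where k: "i \<le> k" "k < length Y" "y' = Y!k" by auto
          have "A (X!j) < A (X!(i+d))" using swA_less[OF Xs(3), of j "i+d"] j i lX d1 by simp
          moreover have "A (Y!i) \<le> A (Y!k)" using swA_le[OF Ys(3)] k by simp
          ultimately show "x < y" using 2 j k xy by simp
        qed
        show "set (take (i+d) X @ drop i Y) \<subseteq> {a..c}"
          using Xs(2) Ys(2) ab by (auto dest: in_set_takeD in_set_dropD)
      qed
      from Xmin[OF this lZ] have XZ: "X = Z \<or> (X, Z) \<in> lexord {(x, y). x < y}" .
      have Zeq: "Z = take (i+d) X @ Y!i # drop (Suc i) Y"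
        unfolding Z_def using i lY by (simp add: Cons_nth_drop_Suc)
      have Xeq: "X = take (i+d) X @ X!(i+d) # drop (Suc (i+d)) X"
        using i lX d1 by (simp add: id_take_nth_drop)
      have ZX: "(Z, X) \<in> lexord {(x, y). x < y}"
      proof -
        have "(Y!i # drop (Suc i) Y, X!(i+d) # drop (Suc (i+d)) X) \<in> lexord {(x, y). x < y}"
          using lt by simp
        then have "(take (i+d) X @ Y!i # drop (Suc i) Y, take (i+d) X @ X!(i+d) # drop (Suc (i+d)) X) \<in> lexord {(x, y). x < y}"
          by (rule lexord_append_leftI)
        then show ?thesis using Zeq Xeq by simp
      qed
      have tr: "trans {(x::nat, y). x < y}" by (auto simp: trans_def)
      have irr: "(X, X) \<notin> lexord {(x::nat, y). x < y}" by (rule lexord_irreflexive) simp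
      from XZ show False
      proof
        assume "X = Z"
        then show False using ZX irr by simp
      next
        assume "(X, Z) \<in> lexord {(x, y). x < y}"
        then have "(X, X) \<in> lexord {(x, y). x < y}" using ZX tr by (rule lexord_trans)
        with irr show False by simp
      qed
    qed
  qed
  have "i < k1 \<longrightarrow> X!(i+d) \<le> Y!i" for i
  proof (induction i)
    case 0
    show ?case
    proof
      assume "0 < k1"
      have "X!(d-1) < b"
      proof (rule ccontr)
        assume "\<not> X!(d-1) < b"
        then have hb: "b \<le> X!(d-1)" by simp
        have "inc_subseq A (Suc b) c (drop d X)"
          unfolding inc_subseq_def
        proof (intro conjI)
          show "sorted_wrt (<) (drop d X)" "sorted_wrt (<) (map A (drop d X))"
            using Xs by (auto simp: drop_map[symmetric])
          show "set (drop d X) \<subseteq> {Suc b..c}"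
          proof
            fix x assume "x \<in> set (drop d X)"
            from in_drop_nth[OF this] obtain k where k: "d \<le> k" "k < length X" "x = X!k" by auto
            have "X!(d-1) < X!k" using sorted_wrt_nth_less[OF Xs(1), of "d-1" k] k d1 by simp
            then show "x \<in> {Suc b..c}" using hb k Xin lX by auto
          qed
        qed
        from noSb[OF this] lX d1 show False by simp
      qed
      then show "X!(0+d) \<le> Y!0" using key[of 0] Yin[of 0] \<open>0 < k1\<close> by force
    qed
  next
    case (Suc i)
    show ?case
    proof
      assume "Suc i < k1"
      then have "X!(i+d) \<le> Y!i" using Suc by simp
      moreover have "Y!i < Y!(Suc i)" using sorted_wrt_nth_less[OF Ys(1), of i "Suc i"] \<open>Suc i < k1\<close> lY by simp
      ultimately show "X!(Suc i+d) \<le> Y!(Suc i)" using key[of "Suc i"] \<open>Suc i < k1\<close> by simp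
    qed
  qed
  then show ?thesis unfolding d_def by simp
qed

end
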